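(* Let $k\ge0$ be an integer and let $G=(X\cup Y,E)$ be a bipartite graph that contains a vertex with more than $2k+2$ non-leaf neighbors. Then $G$ is not 2-layer $k$-planar.
   Context: A leaf is a vertex with exactly one neighbor. A 2-layer drawing of a bipartite graph $G=(X\cup Y,E)$ ($X\cap Y=\emptyset$, $E\subseteq X\times Y$) is a pair $(<_X,<_Y)$ of strict linear orders on $X$ and $Y$. Edges $\{x,y\},\{x',y'\}$ with $x\ne x'\in X$, $y\ne y'\in Y$ cross if $x<_Xx'$ and $y'<_Yy$. The drawing is $k$-planar if every edge crosses at most $k$ edges; $G$ is 2-layer $k$-planar if it admits such a drawing. *)

theory Defs
  imports Main
begin

text \<open>A bipartite graph G = (X \<union> Y, E): X, Y disjoint finite vertex sets, E \<subseteq> X \<times> Y.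
  An edge {x,y} with x \<in> X, y \<in> Y is represented as the pair (x,y).\<close>

definition bipartite_graph :: "'a set \<Rightarrow> 'a set \<Rightarrow> ('a \<times> 'a) set \<Rightarrow> bool" where
  "bipartite_graph X Y E \<longleftrightarrow> finite X \<and> finite Y \<and> X \<inter> Y = {} \<and> E \<subseteq> X \<times> Y"

definition neighbors :: "('a \<times> 'a) set \<Rightarrow> 'a \<Rightarrow> 'a set" where
  "neighbors E v = {u. (v, u) \<in> E \<or> (u, v) \<in> E}"

definition is_leaf :: "('a \<times> 'a) set \<Rightarrow> 'a \<Rightarrow> bool" where
  "is_leaf E v \<longleftrightarrow> card (neighbors E v) = 1"

definition edges_cross :: "'a rel \<Rightarrow> 'a rel \<Rightarrow> 'a \<times> 'a \<Rightarrow> 'a \<times> 'a \<Rightarrow> bool" where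
  "edges_cross ox oy e e' \<longleftrightarrow>
     (let (x, y) = e; (x', y') = e' in
       x \<noteq> x' \<and> y \<noteq> y' \<and>
       (((x, x') \<in> ox \<and> (y', y) \<in> oy) \<or> ((x', x) \<in> ox \<and> (y, y') \<in> oy)))"

definition two_layer_drawing :: "'a set \<Rightarrow> 'a set \<Rightarrow> 'a rel \<Rightarrow> 'a rel \<Rightarrow> bool" where
  "two_layer_drawing X Y ox oy \<longleftrightarrow>
     strict_linear_order_on X ox \<and> ox \<subseteq> X \<times> X \<and>
     strict_linear_order_on Y oy \<and> oy \<subseteq> Y \<times> Y"

definition k_planar_drawing :: "nat \<Rightarrow> ('a \<times> 'a) set \<Rightarrow> 'a rel \<Rightarrow> 'a rel \<Rightarrow> bool" where
  "k_planar_drawing k E ox oy \<longleftrightarrow>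
     (\<forall>e\<in>E. card {e'\<in>E. edges_cross ox oy e e'} \<le> k)"

definition two_layer_k_planar :: "nat \<Rightarrow> 'a set \<Rightarrow> 'a set \<Rightarrow> ('a \<times> 'a) set \<Rightarrow> bool" where
  "two_layer_k_planar k X Y E \<longleftrightarrow>
     (\<exists>ox oy. two_layer_drawing X Y ox oy \<and> k_planar_drawing k E ox oy)"

end

theory Submission
  imports Defs
begin

lemma max_exists:
  assumes "finite A" "A \<noteq> {}" "trans r" "total_on A r"
  shows "\<exists>m\<in>A. \<forall>b\<in>A. b \<noteq> m \<longrightarrow> (b,m) \<in> r"
  using assms
proof (induction A rule: finite_ne_induct)
  case (singleton x) then show ?case by auto
next
  case (insert x F)
  have tF: "total_on F r" using insert.prems by (auto simp: total_on_def)
  obtain m where m: "m \<in> F" "\<forall>b\<in>F. b \<noteq> m \<longrightarrow> (b,m) \<in> r" using insert.IH insert.prems tF by blast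
  have "x \<noteq> m" using m insert.hyps by auto
  then have "(x,m) \<in> r \<or> (m,x) \<in> r" using insert.prems m by (auto simp: total_on_def)
  then show ?case
  proof
    assume "(x,m) \<in> r" then show ?thesis using m by auto
  next
    assume "(m,x) \<in> r" then show ?thesis using m insert.prems(1)
      by (intro bexI[of _ x]) (auto dest: transD)
  qed
qed

lemma rank_exists:
  assumes "finite A" "trans r" "irrefl r" "total_on A r" "n < card A"
  shows "\<exists>a\<in>A. card {b\<in>A. (b,a)\<in>r} = n"
  using assms
proof (induction "card A" arbitrary: A n)
  case 0 then show ?case by simp
next
  case (Suc c)
  then have "A \<noteq> {}" by auto
  then obtain m where m: "m \<in> A" "\<forall>b\<in>A. b \<noteq> m \<longrightarrow> (b,m) \<in> r"
    using max_exists Suc.prems by blast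
  have cA: "card (A - {m}) = c" using Suc.hyps(2) m(1) by simp
  show ?case
  proof (cases "n = c")
    case True
    have "{b\<in>A. (b,m)\<in>r} = A - {m}" using m Suc.prems(3) by (auto simp: irrefl_def)
    then have "card {b\<in>A. (b,m)\<in>r} = n" using cA True by simp
    then show ?thesis using m(1) by blast
  next
    case False
    then have "n < card (A - {m})" using cA Suc.prems Suc.hyps(2) by simp
    moreover have "total_on (A - {m}) r" using Suc.prems by (auto simp: total_on_def)
    ultimately obtain a where a: "a \<in> A - {m}" "card {b\<in>A - {m}. (b,a)\<in>r} = n"
      using Suc.hyps(1)[of "A - {m}" n] cA Suc.prems by auto
    have "(m,a) \<notin> r"
    proof
      assume "(m,a) \<in> r"
      moreover have "(a,m) \<in> r" using a m by auto
      ultimately show False using Suc.prems(2,3) by (auto simp: irrefl_def dest: transD)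
    qed
    then have "{b\<in>A - {m}. (b,a)\<in>r} = {b\<in>A. (b,a)\<in>r}" by auto
    then show ?thesis using a by auto
  qed
qed

lemma core:
  fixes cross :: "'b \<Rightarrow> 'b \<Rightarrow> bool"
  assumes finN: "finite N" and cN: "card N \<ge> 2*k+3"
    and P: "trans P" "irrefl P" "total_on N P"
    and w: "\<forall>u\<in>N. w u \<noteq> v \<and> w u \<in> S" and vS: "v \<in> S" and Q: "total_on S Q"
    and f: "inj_on f N" "f ` N \<subseteq> E" and g: "g ` N \<subseteq> E" and finE: "finite E"
    and cr: "\<forall>u\<in>N. \<forall>u'\<in>N. ((w u, v)\<in>Q \<and> (u',u)\<in>P) \<or> ((v, w u)\<in>Q \<and> (u,u')\<in>P) \<longrightarrow> cross (g u) (f u')"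
    and kp: "\<forall>e\<in>E. card {e'\<in>E. cross e e'} \<le> k"
  shows False
proof -
  obtain a where a: "a \<in> N" "card {b\<in>N. (b,a)\<in>P} = k+1"
    using rank_exists[OF finN P, of "k+1"] cN by auto
  define Bl where "Bl = {b\<in>N. (b,a)\<in>P}"
  define Ab where "Ab = {b\<in>N. (a,b)\<in>P}"
  have sub1: "Bl \<subseteq> N" "Ab \<subseteq> N" unfolding Bl_def Ab_def by auto
  have "N = Bl \<union> {a} \<union> Ab"
  proof
    show "N \<subseteq> Bl \<union> {a} \<union> Ab"
    proof
      fix x assume "x \<in> N"
      then show "x \<in> Bl \<union> {a} \<union> Ab" using a(1) P(3) unfolding Bl_def Ab_def total_on_def by blast
    qed
  qed (use sub1 a(1) in blast)
  moreover have "Bl \<inter> Ab = {}"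
  proof -
    { fix x assume "x \<in> Bl" "x \<in> Ab"
      then have "(x,a) \<in> P" "(a,x) \<in> P" unfolding Bl_def Ab_def by auto
      then have "(a,a) \<in> P" using P(1) by (meson transD)
      then have False using P(2) by (simp add: irrefl_def) }
    then show ?thesis by blast
  qed
  moreover have "a \<notin> Bl" "a \<notin> Ab" using P(2) unfolding Bl_def Ab_def irrefl_def by auto
  moreover have "finite Bl" "finite Ab" using finN sub1 finite_subset by auto
  ultimately have "card N = card Bl + 1 + card Ab"
    by (simp add: card_Un_disjoint)
  then have cAb: "card Ab \<ge> k+1" using cN a(2) Bl_def by simp
  have cBl: "card Bl = k+1" using a(2) Bl_def by simp
  have ga: "g a \<in> E" using g a by auto
  have "(w a, v) \<in> Q \<or> (v, w a) \<in> Q" using w a vS Q unfolding total_on_def by blast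
  then show False
  proof
    assume h: "(w a, v) \<in> Q"
    have "f ` Bl \<subseteq> {e'\<in>E. cross (g a) e'}"
    proof
      fix e assume "e \<in> f ` Bl"
      then obtain u where u: "u \<in> Bl" "e = f u" by blast
      then have uN: "u \<in> N" and "(u,a) \<in> P" using sub1 unfolding Bl_def by auto
      then have "cross (g a) (f u)" using cr a(1) h by blast
      moreover have "f u \<in> E" using f(2) uN by blast
      ultimately show "e \<in> {e'\<in>E. cross (g a) e'}" using u by simp
    qed
    moreover have "card (f ` Bl) = k+1" using cBl inj_on_subset[OF f(1) sub1(1)] by (simp add: card_image)
    ultimately have "k+1 \<le> card {e'\<in>E. cross (g a) e'}" using finE card_mono[of "{e'\<in>E. cross (g a) e'}" "f ` Bl"] by simp
    moreover have "card {e'\<in>E. cross (g a) e'} \<le> k" using kp ga by blast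
    ultimately show False by simp
  next
    assume h: "(v, w a) \<in> Q"
    have "f ` Ab \<subseteq> {e'\<in>E. cross (g a) e'}"
    proof
      fix e assume "e \<in> f ` Ab"
      then obtain u where u: "u \<in> Ab" "e = f u" by blast
      then have uN: "u \<in> N" and "(a,u) \<in> P" using sub1 unfolding Ab_def by auto
      then have "cross (g a) (f u)" using cr a(1) h by blast
      moreover have "f u \<in> E" using f(2) uN by blast
      ultimately show "e \<in> {e'\<in>E. cross (g a) e'}" using u by simp
    qed
    moreover have "card (f ` Ab) \<ge> k+1" using cAb inj_on_subset[OF f(1) sub1(2)] by (simp add: card_image)
    ultimately have "k+1 \<le> card {e'\<in>E. cross (g a) e'}" using finE card_mono[of "{e'\<in>E. cross (g a) e'}" "f ` Ab"] by simp
    moreover have "card {e'\<in>E. cross (g a) e'} \<le> k" using kp ga by blast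
    ultimately show False by simp
  qed
qed


lemma other_nb:
  assumes "v \<in> neighbors E u" "\<not> is_leaf E u"
  shows "\<exists>w\<in>neighbors E u. w \<noteq> v"
proof (rule ccontr)
  assume "\<not> ?thesis"
  then have "neighbors E u = {v}" using assms(1) by blast
  then show False using assms(2) unfolding is_leaf_def by simp
qed

theorem mainTheorem9:
  fixes X Y :: "'a set" and E :: "('a \<times> 'a) set" and k :: nat
  assumes "bipartite_graph X Y E"
    and "\<exists>v \<in> X \<union> Y. card {u \<in> neighbors E v. \<not> is_leaf E u} > 2 * k + 2"
  shows "\<not> two_layer_k_planar k X Y E"
proof
  assume "two_layer_k_planar k X Y E"
  then obtain ox oy where dr: "two_layer_drawing X Y ox oy" and kp: "k_planar_drawing k E ox oy"
    unfolding two_layer_k_planar_def by blast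
  have ox: "trans ox" "irrefl ox" "total_on X ox" and oy: "trans oy" "irrefl oy" "total_on Y oy"
    using dr unfolding two_layer_drawing_def strict_linear_order_on_def by auto
  have kp': "\<forall>e\<in>E. card {e'\<in>E. edges_cross ox oy e e'} \<le> k"
    using kp unfolding k_planar_drawing_def by blast
  have bg: "finite X" "finite Y" "X \<inter> Y = {}" "E \<subseteq> X \<times> Y"
    using assms(1) unfolding bipartite_graph_def by auto
  have finE: "finite E" using bg finite_subset by blast
  obtain v where v: "v \<in> X \<union> Y" and cN: "card {u \<in> neighbors E v. \<not> is_leaf E u} > 2 * k + 2"
    using assms(2) by blast
  define N where "N = {u \<in> neighbors E v. \<not> is_leaf E u}"
  have nbsub: "neighbors E z \<subseteq> X \<union> Y" for z using bg(4) unfolding neighbors_def by auto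
  have finN: "finite N" unfolding N_def using nbsub[of v] bg(1,2)
    by (metis (no_types, lifting) finite_UnI finite_subset mem_Collect_eq subsetI)
  have cN': "card N \<ge> 2*k+3" using cN unfolding N_def by simp
  have nbsym: "v \<in> neighbors E u \<longleftrightarrow> u \<in> neighbors E v" for u unfolding neighbors_def by auto
  show False
  proof (cases "v \<in> X")
    case True
    have Nprop: "(v,u) \<in> E \<and> u \<in> Y \<and> (\<exists>w. (w,u) \<in> E \<and> w \<noteq> v)" if "u \<in> N" for u
    proof -
      have un: "u \<in> neighbors E v" "\<not> is_leaf E u" using that unfolding N_def by auto
      have vu: "(v,u) \<in> E" using un(1) True bg unfolding neighbors_def by blast
      then have uY: "u \<in> Y" using bg by blast
      obtain w where w: "w \<in> neighbors E u" "w \<noteq> v" using other_nb[OF _ un(2)] nbsym un(1) by blast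
      have "(w,u) \<in> E" using w(1) uY bg unfolding neighbors_def by blast
      then show ?thesis using vu uY w(2) by blast
    qed
    define W where "W u = (SOME w. (w,u) \<in> E \<and> w \<noteq> v)" for u
    have W: "(W u, u) \<in> E \<and> W u \<noteq> v" if "u \<in> N" for u
      using Nprop[OF that] unfolding W_def by (metis (mono_tags, lifting) someI_ex)
    show False
    proof (rule core[OF finN cN' oy(1,2), of W v X ox "\<lambda>u. (v,u)" E "\<lambda>u. (W u, u)" "edges_cross ox oy"])
      show "total_on N oy" using oy(3) Nprop unfolding total_on_def by blast
      show "\<forall>u\<in>N. W u \<noteq> v \<and> W u \<in> X" using W bg by blast
      show "v \<in> X" by fact
      show "total_on X ox" by fact
      show "inj_on (\<lambda>u. (v, u)) N" by (simp add: inj_on_def)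
      show "(\<lambda>u. (v, u)) ` N \<subseteq> E" using Nprop by blast
      show "(\<lambda>u. (W u, u)) ` N \<subseteq> E" using W by blast
      show "finite E" by fact
      show "\<forall>e\<in>E. card {e' \<in> E. edges_cross ox oy e e'} \<le> k" by fact
      show "\<forall>u\<in>N. \<forall>u'\<in>N. (W u, v) \<in> ox \<and> (u', u) \<in> oy \<or> (v, W u) \<in> ox \<and> (u, u') \<in> oy \<longrightarrow>
          edges_cross ox oy (W u, u) (v, u')"
        using W oy(2) unfolding edges_cross_def irrefl_def by auto
    qed
  next
    case False
    then have vY: "v \<in> Y" using v by blast
    have Nprop: "(u,v) \<in> E \<and> u \<in> X \<and> (\<exists>w. (u,w) \<in> E \<and> w \<noteq> v)" if "u \<in> N" for u
    proof -
      have un: "u \<in> neighbors E v" "\<not> is_leaf E u" using that unfolding N_def by auto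
      have vu: "(u,v) \<in> E" using un(1) False bg unfolding neighbors_def by blast
      then have uX: "u \<in> X" using bg by blast
      obtain w where w: "w \<in> neighbors E u" "w \<noteq> v" using other_nb[OF _ un(2)] nbsym un(1) by blast
      have "(u,w) \<in> E" using w(1) uX bg unfolding neighbors_def by blast
      then show ?thesis using vu uX w(2) by blast
    qed
    define W where "W u = (SOME w. (u,w) \<in> E \<and> w \<noteq> v)" for u
    have W: "(u, W u) \<in> E \<and> W u \<noteq> v" if "u \<in> N" for u
      using Nprop[OF that] unfolding W_def by (metis (mono_tags, lifting) someI_ex)
    show False
    proof (rule core[OF finN cN' ox(1,2), of W v Y oy "\<lambda>u. (u,v)" E "\<lambda>u. (u, W u)" "edges_cross ox oy"])
      show "total_on N ox" using ox(3) Nprop unfolding total_on_def by blast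
      show "\<forall>u\<in>N. W u \<noteq> v \<and> W u \<in> Y" using W bg by blast
      show "v \<in> Y" by fact
      show "total_on Y oy" by fact
      show "inj_on (\<lambda>u. (u, v)) N" by (simp add: inj_on_def)
      show "(\<lambda>u. (u, v)) ` N \<subseteq> E" using Nprop by blast
      show "(\<lambda>u. (u, W u)) ` N \<subseteq> E" using W by blast
      show "finite E" by fact
      show "\<forall>e\<in>E. card {e' \<in> E. edges_cross ox oy e e'} \<le> k" by fact
      show "\<forall>u\<in>N. \<forall>u'\<in>N. (W u, v) \<in> oy \<and> (u', u) \<in> ox \<or> (v, W u) \<in> oy \<and> (u, u') \<in> ox \<longrightarrow>
          edges_cross ox oy (u, W u) (u', v)"
        using W ox(2) unfolding edges_cross_def irrefl_def by auto
    qed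
  qed
qed

end
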